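(* For an integer $\ell\ge 1$ and $1\le u\le \ell^3$ let $c_u(\ell):=\#\{(a,b,c)\in\{1,\dots,\ell\}^3:\ abc=u\}$, and set $$C_3(\ell):=\sum_{\substack{u,v\le \ell^3\\ uv \text{ is a perfect square}}} c_u(\ell)c_v(\ell).$$ Then for every $\delta>0$ one has $C_3(m)\ll_\delta m^{3+\delta}$ for all integers $m\ge 1$.
   Context: $f\ll_\delta g$ means $|f|\le C g$ for a constant $C$ depending only on $\delta$ (for all sufficiently large $m$). *)

theory Defs
  imports Complex_Main
begin

definition cnt :: "nat \<Rightarrow> nat \<Rightarrow> nat" where
  "cnt l u = card {(a,b,c). a \<in> {1..l} \<and> b \<in> {1..l} \<and> c \<in> {1..l} \<and> a*b*c = u}"

definition is_square :: "nat \<Rightarrow> bool" where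
  "is_square n \<longleftrightarrow> (\<exists>k. n = k^2)"

definition C3 :: "nat \<Rightarrow> nat" where
  "C3 l = (\<Sum>(u,v) \<in> {(u,v). u \<in> {1..l^3} \<and> v \<in> {1..l^3} \<and> is_square (u*v)}.
              cnt l u * cnt l v)"

end

theory Submission imports Defs "HOL-Computational_Algebra.Primes" begin
lemma ndiv_step:
  fixes p m k :: nat
  assumes p: "prime p" and nd: "\<not> p dvd m" and m: "m > 0"
  shows "card {d. d dvd p^k*m} \<le> (k+1) * card {d. d dvd m}"
proof -
  let ?f = "\<lambda>d. (multiplicity p d, d div p^(multiplicity p d))"
  have inj: "inj_on ?f {d. d dvd p^k*m}"
  proof (rule inj_onI)
    fix x y assume "x \<in> {d. d dvd p^k*m}" "y \<in> {d. d dvd p^k*m}" "?f x = ?f y"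
    then show "x = y"
      by (metis fst_conv snd_conv multiplicity_dvd dvd_mult_div_cancel)
  qed
  have sub: "?f ` {d. d dvd p^k*m} \<subseteq> {0..k} \<times> {d. d dvd m}"
  proof
    fix z assume "z \<in> ?f ` {d. d dvd p^k*m}"
    then obtain d where d: "d dvd p^k*m" and z: "z = ?f d" by auto
    have n0: "p^k*m \<noteq> 0" using m p by (simp add: prime_gt_0_nat)
    have d0: "d \<noteq> 0" using d n0 by (metis dvd_0_left)
    have nu: "\<not> is_unit p" using p not_prime_unit by blast
    have mk: "multiplicity p (p^k*m) = k"
      by (rule multiplicity_decomposeI[OF refl nd]) (use p in auto)
    have "multiplicity p d \<le> k"
    proof -
      have "p ^ multiplicity p d dvd p^k*m" using multiplicity_dvd d dvd_trans by blast
      from multiplicity_geI[OF n0 nu this] mk show ?thesis by simp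
    qed
    moreover have "d div p^(multiplicity p d) dvd m"
    proof -
      let ?e = "d div p^(multiplicity p d)"
      have ne: "\<not> p dvd ?e" using multiplicity_decompose[OF d0 nu] .
      have "coprime ?e p" using p ne
        by (metis coprime_commute prime_imp_coprime)
      hence cp: "coprime ?e (p^k)" by simp
      have "?e dvd d" by (metis dvd_div_mult_self dvd_triv_left multiplicity_dvd)
      hence "?e dvd p^k*m" using d dvd_trans by blast
      thus ?thesis using cp coprime_dvd_mult_right_iff by blast
    qed
    ultimately show "z \<in> {0..k} \<times> {d. d dvd m}" using z by auto
  qed
  have fin: "finite {d. d dvd m}" using finite_divisors_nat m by blast
  have "card {d. d dvd p^k*m} = card (?f ` {d. d dvd p^k*m})" using card_image[OF inj] by simp
  also have "\<dots> \<le> card ({0..k} \<times> {d. d dvd m})" using sub fin by (intro card_mono) auto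
  also have "\<dots> = (k+1) * card {d. d dvd m}" by (simp add: card_cartesian_product)
  finally show ?thesis .
qed

lemma kp_bound:
  fixes e :: real and p k :: nat
  assumes e: "e > 0" and p: "p \<ge> 2"
  shows "real k + 1 \<le> (1 + 1/(e*ln 2)) * real p powr (real k * e)"
proof -
  have l2: "ln 2 > (0::real)" by simp
  have "ln 2 \<le> ln (real p)" using p by simp
  hence "1 + real k * e * ln 2 \<le> 1 + real k * e * ln (real p)"
    using e by (simp add: mult_left_mono)
  also have "\<dots> \<le> exp (real k * e * ln (real p))" by (rule exp_ge_add_one_self)
  also have "\<dots> = real p powr (real k * e)" using p by (simp add: powr_def mult.commute)
  finally have A: "1 + real k * e * ln 2 \<le> real p powr (real k * e)" .
  have c1: "1 \<le> 1 + 1/(e*ln 2)" using e l2 by simp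
  have "real k + 1 \<le> (1 + 1/(e*ln 2)) * (1 + real k * e * ln 2)"
  proof -
    have "(1 + 1/(e*ln 2)) * (1 + real k * e * ln 2) = 1 + 1/(e*ln 2) + real k * e * ln 2 + real k"
      using e l2 by (simp add: field_simps)
    moreover have "0 \<le> 1/(e*ln 2) + real k * e * ln 2" using e l2 by simp
    ultimately show ?thesis by linarith
  qed
  also have "\<dots> \<le> (1 + 1/(e*ln 2)) * real p powr (real k * e)"
    using A c1 by (intro mult_left_mono) auto
  finally show ?thesis .
qed

lemma kp_bound_big:
  fixes e :: real and p k :: nat
  assumes e: "e > 0" and p: "real p \<ge> exp (1/e)"
  shows "real k + 1 \<le> real p powr (real k * e)"
proof -
  have pp: "real p > 0" using p by (meson exp_gt_zero less_le_trans)
  have "1/e \<le> ln (real p)" using p pp by (metis ln_exp ln_le_cancel_iff exp_gt_zero)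
  hence "1 \<le> e * ln (real p)" using e by (simp add: field_simps)
  hence "real k \<le> real k * e * ln (real p)"
    by (metis mult.assoc mult_left_mono mult.right_neutral of_nat_0_le_iff)
  hence "1 + real k \<le> 1 + real k * e * ln (real p)" by simp
  also have "\<dots> \<le> exp (real k * e * ln (real p))" by (rule exp_ge_add_one_self)
  also have "\<dots> = real p powr (real k * e)" using pp by (simp add: powr_def mult.commute)
  finally show ?thesis by simp
qed

lemma div_bound_aux:
  fixes e :: real and n :: nat
  assumes e: "e > 0" and n: "n > 0"
  shows "real (card {d. d dvd n}) \<le> (1 + 1/(e*ln 2)) ^ card {q. prime q \<and> q dvd n \<and> q < nat \<lceil>exp (1/e)\<rceil>} * real n powr e"
  using n
proof (induction n rule: less_induct)
  case (less n)
  define c where "c = 1 + 1/(e*ln 2)"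
  define P where "P = nat \<lceil>exp (1/e)\<rceil>"
  define S where "S = (\<lambda>n. {q. prime q \<and> q dvd n \<and> q < P})"
  have c1: "c \<ge> 1" using e by (simp add: c_def)
  show ?case
  proof (cases "n = 1")
    case True
    have E: "{q. prime q \<and> q dvd n \<and> q < nat \<lceil>exp (1/e)\<rceil>} = {}" using True by auto
    show ?thesis unfolding E using True by simp
  next
    case False
    then obtain p where p: "prime p" "p dvd n" using less.prems prime_factor_nat by blast
    define k where "k = multiplicity p n"
    define m where "m = n div p^k"
    have n0: "n \<noteq> 0" using less.prems by simp
    have nu: "\<not> is_unit p" using p not_prime_unit by blast
    have nm: "n = p^k * m" unfolding m_def k_def by (metis dvd_mult_div_cancel multiplicity_dvd)
    have nd: "\<not> p dvd m" unfolding m_def k_def using multiplicity_decompose[OF n0 nu] .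
    have k1: "k \<ge> 1" unfolding k_def using multiplicity_geI[OF n0 nu, of 1] p by simp
    have m0: "m > 0" using nm n0 by (simp add: gr0I)
    have p2: "p \<ge> 2" using p prime_ge_2_nat by blast
    have "p^k > 1" using p2 k1 by (intro one_less_power) auto
    hence "m < p^k*m" using m0 by simp
    hence mn: "m < n" using nm by simp
    have IH: "real (card {d. d dvd m}) \<le> c ^ card (S m) * real m powr e"
      using less.IH[OF mn m0] unfolding c_def S_def P_def .
    have step: "card {d. d dvd n} \<le> (k+1) * card {d. d dvd m}"
      using ndiv_step[OF p(1) nd m0, of k] nm by simp
    have Ssub: "S m \<subseteq> S n" unfolding S_def using nm by auto
    have finS: "finite (S n)" unfolding S_def by auto
    have pe: "real n powr e = real p powr (real k * e) * real m powr e"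
    proof -
      have pp: "real p > 0" using p2 by simp
      have "real n = real p ^ k * real m" using nm by simp
      hence "real n powr e = (real p ^ k) powr e * real m powr e" by (simp add: powr_mult)
      moreover have "(real p ^ k) powr e = real p powr (real k * e)"
        using pp by (simp add: powr_realpow[symmetric] powr_powr)
      ultimately show ?thesis by simp
    qed
    have key: "(real k + 1) * c ^ card (S m) \<le> c ^ card (S n) * real p powr (real k * e)"
    proof (cases "p < P")
      case True
      have "p \<in> S n" "p \<notin> S m" using True p nd unfolding S_def by auto
      hence "insert p (S m) \<subseteq> S n" using Ssub by auto
      hence "card (insert p (S m)) \<le> card (S n)" using finS card_mono by blast
      moreover have "finite (S m)" using finS Ssub finite_subset by blast
      ultimately have cs: "Suc (card (S m)) \<le> card (S n)" using \<open>p \<notin> S m\<close> by simp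
      have "(real k + 1) * c ^ card (S m) \<le> (c * real p powr (real k * e)) * c ^ card (S m)"
        using kp_bound[OF e p2, of k] c1 unfolding c_def by (intro mult_right_mono) auto
      also have "\<dots> = c ^ Suc (card (S m)) * real p powr (real k * e)" by simp
      also have "\<dots> \<le> c ^ card (S n) * real p powr (real k * e)"
        using cs c1 by (intro mult_right_mono power_increasing) auto
      finally show ?thesis .
    next
      case False
      hence "real p \<ge> exp (1/e)" unfolding P_def by linarith
      hence "(real k + 1) * c ^ card (S m) \<le> real p powr (real k * e) * c ^ card (S m)"
        using kp_bound_big[OF e, of p k] c1 by (intro mult_right_mono) auto
      also have "\<dots> \<le> c ^ card (S n) * real p powr (real k * e)"
        using c1 Ssub finS card_mono by (subst mult.commute, intro mult_right_mono power_increasing) auto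
      finally show ?thesis .
    qed
    have "real (card {d. d dvd n}) \<le> (real k + 1) * real (card {d. d dvd m})"
      using of_nat_mono[OF step, where ?'a=real] by (simp add: algebra_simps)
    also have "\<dots> \<le> (real k + 1) * (c ^ card (S m) * real m powr e)"
      using IH by (intro mult_left_mono) auto
    also have "\<dots> = ((real k + 1) * c ^ card (S m)) * real m powr e" by simp
    also have "\<dots> \<le> (c ^ card (S n) * real p powr (real k * e)) * real m powr e"
      using key by (intro mult_right_mono) auto
    also have "\<dots> = c ^ card (S n) * real n powr e" using pe by simp
    finally show ?thesis unfolding c_def S_def P_def .
  qed
qed

lemma div_bound:
  fixes e :: real
  assumes e: "e > 0"
  shows "\<exists>K\<ge>1. \<forall>n>0. real (card {d. d dvd n}) \<le> K * real n powr e"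
proof -
  define c where "c = 1 + 1/(e*ln 2)"
  define P where "P = nat \<lceil>exp (1/e)\<rceil>"
  have c1: "c \<ge> 1" using e by (simp add: c_def)
  show ?thesis
  proof (intro exI[of _ "c ^ P"] conjI allI impI)
    show "1 \<le> c ^ P" using c1 by simp
    fix n :: nat assume n: "n > 0"
    have "card {q. prime q \<and> q dvd n \<and> q < P} \<le> card {..<P}" by (intro card_mono) auto
    hence "c ^ card {q. prime q \<and> q dvd n \<and> q < P} \<le> c ^ P" using c1 by (intro power_increasing) auto
    thus "real (card {d. d dvd n}) \<le> c ^ P * real n powr e"
      using div_bound_aux[OF e n] unfolding c_def[symmetric] P_def[symmetric]
      by (meson mult_right_mono order_trans powr_ge_zero)
  qed
qed

lemma cnt_le:
  assumes u: "u > 0"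
  shows "cnt l u \<le> card {d. d dvd u} ^ 2"
proof -
  let ?T = "{(a,b,c). a \<in> {1..l} \<and> b \<in> {1..l} \<and> c \<in> {1..l} \<and> a*b*c = u}"
  let ?D = "{d. d dvd u}"
  have inj: "inj_on (\<lambda>(a,b,c). (a,b)) ?T"
    unfolding inj_on_def by auto
  have sub: "(\<lambda>(a,b,c). (a,b)) ` ?T \<subseteq> ?D \<times> ?D"
  proof
    fix z assume "z \<in> (\<lambda>(a,b,c). (a,b)) ` ?T"
    then obtain a b c where "a*b*c = u" "z = (a,b)" by auto
    moreover have "a dvd a*b*c \<and> b dvd a*b*c" by (metis dvd_mult dvd_mult2 dvd_refl)
    ultimately show "z \<in> ?D \<times> ?D" by auto
  qed
  have fin: "finite ?D" using u finite_divisors_nat by blast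
  have "cnt l u = card ((\<lambda>(a,b,c). (a,b)) ` ?T)" unfolding cnt_def using card_image[OF inj] by simp
  also have "\<dots> \<le> card (?D \<times> ?D)" using sub fin by (intro card_mono) auto
  also have "\<dots> = card ?D ^ 2" by (simp add: card_cartesian_product power2_eq_square)
  finally show ?thesis .
qed

lemma S_le:
  fixes N :: nat
  shows "card {(u,v). u \<in> {1..N} \<and> v \<in> {1..N} \<and> is_square (u*v)} \<le> (\<Sum>k\<in>{1..N}. card {d. d dvd k^2})"
proof -
  let ?S = "{(u,v). u \<in> {1..N} \<and> v \<in> {1..N} \<and> is_square (u*v)}"
  let ?A = "\<lambda>k. (\<lambda>u. (u, k^2 div u)) ` {d. d dvd k^2}"
  have sub: "?S \<subseteq> (\<Union>k\<in>{1..N}. ?A k)"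
  proof clarify
    fix u v assume h: "u \<in> {1..N}" "v \<in> {1..N}" "is_square (u*v)"
    then obtain k where k: "u*v = k^2" unfolding is_square_def by auto
    have "k \<noteq> 0"
    proof
      assume "k = 0"
      hence "u*v = 0" using k by simp
      thus False using h by auto
    qed
    moreover have "k \<le> N"
    proof (rule ccontr)
      assume "\<not> k \<le> N"
      hence "N*N < k*k" by (simp add: mult_strict_mono)
      moreover have "u*v \<le> N*N" using h by (simp add: mult_le_mono)
      ultimately show False using k by (simp add: power2_eq_square)
    qed
    moreover have "(u,v) \<in> ?A k"
    proof
      show "u \<in> {d. d dvd k^2}" using k by (metis dvd_triv_left mem_Collect_eq)
      have "u > 0" using h by auto
      thus "(u,v) = (u, k^2 div u)" by (simp add: k[symmetric])
    qed
    ultimately show "(u,v) \<in> (\<Union>k\<in>{1..N}. ?A k)" by auto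
  qed
  have "card ?S \<le> card (\<Union>k\<in>{1..N}. ?A k)"
    by (intro card_mono sub) (auto intro: finite_divisors_nat)
  also have "\<dots> \<le> (\<Sum>k\<in>{1..N}. card (?A k))" by (rule card_UN_le) simp
  also have "\<dots> \<le> (\<Sum>k\<in>{1..N}. card {d. d dvd k^2})"
    by (intro sum_mono card_image_le) (auto intro: finite_divisors_nat)
  finally show ?thesis .
qed

theorem lemma2p3:
  fixes \<delta> :: real
  assumes "\<delta> > 0"
  shows "\<exists>C::real. \<forall>m::nat. m \<ge> 1 \<longrightarrow> real (C3 m) \<le> C * real m powr (3 + \<delta>)"
proof -
  define e where "e = \<delta> / 18"
  have e: "e > 0" using assms by (simp add: e_def)
  obtain K where K1: "K \<ge> 1" and K: "\<And>n. n > 0 \<Longrightarrow> real (card {d. d dvd n}) \<le> K * real n powr e"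
    using div_bound[OF e] by blast
  show ?thesis
  proof (intro exI[of _ "K^5"] allI impI)
    fix m :: nat assume m: "m \<ge> 1"
    define N where "N = m^3"
    have N1: "N \<ge> 1" using m by (simp add: N_def)
    define X where "X = real N powr e"
    have X1: "X \<ge> 1" using N1 e by (simp add: X_def ge_one_powr_ge_zero)
    let ?S = "{(u,v). u \<in> {1..N} \<and> v \<in> {1..N} \<and> is_square (u*v)}"
    have cntb: "real (cnt m u) \<le> (K*X)^2" if u: "u \<in> {1..N}" for u
    proof -
      have "real (card {d. d dvd u}) \<le> K * real u powr e" using u K by auto
      also have "\<dots> \<le> K * X" unfolding X_def using u e K1
        by (intro mult_left_mono powr_mono2) auto
      finally have "real (card {d. d dvd u}) \<le> K*X" .
      hence "real (card {d. d dvd u}) ^ 2 \<le> (K*X)^2" by (intro power_mono) auto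
      moreover have "real (cnt m u) \<le> real (card {d. d dvd u}) ^ 2"
        using cnt_le[of u m] u by (metis atLeastAtMost_iff of_nat_le_iff of_nat_power less_le_trans zero_less_one le_refl)
      ultimately show ?thesis by linarith
    qed
    have Db: "real (card {d. d dvd k^2}) \<le> K * X^2" if k: "k \<in> {1..N}" for k
    proof -
      have "k^2 > 0" using k by simp
      hence "real (card {d. d dvd k^2}) \<le> K * real (k^2) powr e" using K by blast
      also have "\<dots> \<le> K * real (N*N) powr e" using k e K1
        by (intro mult_left_mono powr_mono2) (auto simp: power2_eq_square intro!: mult_mono)
      also have "\<dots> = K * X^2" unfolding X_def by (simp add: powr_mult power2_eq_square)
      finally show ?thesis .
    qed
    have "real (C3 m) = (\<Sum>(u,v)\<in>?S. real (cnt m u) * real (cnt m v))"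
      unfolding C3_def N_def by (simp add: case_prod_beta)
    also have "\<dots> \<le> (\<Sum>(u,v)\<in>?S. (K*X)^4)"
    proof (rule sum_mono)
      fix z assume "z \<in> ?S"
      then obtain u v where z: "z = (u,v)" "u \<in> {1..N}" "v \<in> {1..N}" by auto
      have "real (cnt m u) * real (cnt m v) \<le> (K*X)^2 * (K*X)^2"
        using cntb[OF z(2)] cntb[OF z(3)] by (intro mult_mono) auto
      also have "\<dots> = (K*X)^4" by algebra
      finally show "(case z of (u,v) \<Rightarrow> real (cnt m u) * real (cnt m v)) \<le> (case z of (u,v) \<Rightarrow> (K*X)^4)"
        using z by simp
    qed
    also have "\<dots> = real (card ?S) * (K*X)^4" by simp
    also have "\<dots> \<le> (\<Sum>k\<in>{1..N}. real (card {d. d dvd k^2})) * (K*X)^4"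
    proof -
      have "real (card ?S) \<le> (\<Sum>k\<in>{1..N}. real (card {d. d dvd k^2}))"
        using of_nat_mono[OF S_le[of N], where ?'a=real] by simp
      thus ?thesis by (intro mult_right_mono) auto
    qed
    also have "\<dots> \<le> (\<Sum>k\<in>{1..N}. K * X^2) * (K*X)^4"
      using Db by (intro mult_right_mono sum_mono) auto
    also have "\<dots> = (real N * (K * X^2)) * (K*X)^4" by simp
    also have "\<dots> = K^5 * (real N * X^6)" by algebra
    also have "real N * X^6 = real m powr (3 + \<delta>)"
    proof -
      have mp: "real m > 0" using m by simp
      have N3: "real N = real m powr 3"
        unfolding N_def using powr_realpow[OF mp, of 3] by simp
      have "X^6 = real N powr (6*e)" unfolding X_def
        using powr_power[of "real N" e 6] N1 by simp
      also have "\<dots> = real m powr (3*(6*e))" unfolding N3 by (rule powr_powr)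
      finally have X6: "X^6 = real m powr (18*e)" by simp
      have "real N * X^6 = real m powr (3 + 18*e)" unfolding N3 X6 by (rule powr_add[symmetric])
      thus ?thesis using e_def by simp
    qed
    finally show "real (C3 m) \<le> K^5 * real m powr (3 + \<delta>)" .
  qed
qed

end
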